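(* Let $n\ge 6$ and $k$ be coprime integers with $3\le k\le n-3$. Then $\mathsf{BO}(k,\mathbb{Z}/n\mathbb{Z})\ge k+1$; that is, there is a subset of $\mathbb{Z}/n\mathbb{Z}$ of cardinality $k$ which is not $k$-barycentric.
   Context: For a positive integer $k$, a set $\{g_1,\dots,g_k\}$ of $k$ distinct elements of a finite abelian group $G$ (written additively) is called $k$-barycentric if $\sum_{i=1}^k g_i = k\,g_j$ for some $1\le j\le k$. The $k$-th barycentric Olson constant $\mathsf{BO}(k,G)$ is the smallest integer $\ell$ such that every subset $A\subseteq G$ with $|A|\ge \ell$ contains a $k$-barycentric subset (so that always $\mathsf{BO}(k,G)\le |G|+1$). *)

theory Defs
  imports "HOL-Number_Theory.Number_Theory"
begin

text \<open>The cyclic group Z/nZ (n > 0) is modelled by the canonical representatives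
  {0..<n} :: int set, with addition taken modulo n.\<close>

definition zn_barycentric :: "nat \<Rightarrow> nat \<Rightarrow> int set \<Rightarrow> bool" where
  "zn_barycentric n k S \<longleftrightarrow>
     S \<subseteq> {0..<int n} \<and> card S = k \<and> (\<exists>g\<in>S. [\<Sum>S = int k * g] (mod int n))"

definition BO_Zn :: "nat \<Rightarrow> nat \<Rightarrow> nat" where
  "BO_Zn k n = (LEAST l. \<forall>A. A \<subseteq> {0..<int n} \<and> card A \<ge> l \<longrightarrow>
                            (\<exists>S\<subseteq>A. zn_barycentric n k S))"

end

theory Submission
  imports Defs
begin

lemma pairs_facts:
  fixes T :: "int set" and N :: int
  assumes "finite T" "\<forall>j\<in>T. 0 < j \<and> 2*j < N"
  shows "card (T \<union> (\<lambda>j. N - j) ` T) = 2 * card T"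
    and "\<Sum>(T \<union> (\<lambda>j. N - j) ` T) = int (card T) * N"
    and "T \<union> (\<lambda>j. N - j) ` T \<subseteq> {1..<N}"
proof -
  have inj: "inj_on (\<lambda>j. N - j) T" by (auto simp: inj_on_def)
  have disj: "T \<inter> (\<lambda>j. N - j) ` T = {}"
  proof (rule ccontr)
    assume "T \<inter> (\<lambda>j. N - j) ` T \<noteq> {}"
    then obtain a b where "a \<in> T" "b \<in> T" "a = N - b" by blast
    moreover have "2*a < N" "2*b < N" using assms(2) \<open>a \<in> T\<close> \<open>b \<in> T\<close> by auto
    ultimately show False by linarith
  qed
  show "card (T \<union> (\<lambda>j. N - j) ` T) = 2 * card T"
    using card_Un_disjoint[OF assms(1) finite_imageI[OF assms(1)] disj] card_image[OF inj] by simp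
  have "\<Sum>(T \<union> (\<lambda>j. N - j) ` T) = \<Sum>T + \<Sum>((\<lambda>j. N - j) ` T)"
    using sum.union_disjoint[OF assms(1) finite_imageI[OF assms(1)] disj] by simp
  also have "\<Sum>((\<lambda>j. N - j) ` T) = (\<Sum>j\<in>T. N - j)" using sum.reindex[OF inj] by simp
  also have "\<Sum>T + (\<Sum>j\<in>T. N - j) = (\<Sum>j\<in>T. j + (N - j))" by (rule sum.distrib[symmetric])
  also have "\<dots> = int (card T) * N" by simp
  finally show "\<Sum>(T \<union> (\<lambda>j. N - j) ` T) = int (card T) * N" .
  show "T \<union> (\<lambda>j. N - j) ` T \<subseteq> {1..<N}" using assms(2) by force
qed

lemma key:
  fixes A :: "int set"
  assumes "A \<subseteq> {1..<int n}" "card A = k" "int n dvd \<Sum>A" "coprime k n"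
  shows "\<not> (\<exists>S\<subseteq>A. zn_barycentric n k S)"
proof
  assume "\<exists>S\<subseteq>A. zn_barycentric n k S"
  then obtain S where S: "S \<subseteq> A" "zn_barycentric n k S" by blast
  have fA: "finite A" using assms(1) finite_subset by blast
  have "S = A" using S card_subset_eq[OF fA S(1)] assms(2) by (simp add: zn_barycentric_def)
  then obtain g where g: "g \<in> A" "[\<Sum>A = int k * g] (mod int n)"
    using S(2) by (auto simp: zn_barycentric_def)
  have "int n dvd int k * g" using g(2) assms(3) by (metis cong_dvd_iff)
  moreover have "coprime (int n) (int k)" using assms(4) by (simp add: coprime_commute)
  ultimately have "int n dvd g" by (simp add: coprime_dvd_mult_right_iff)
  moreover have "0 < g" "g < int n" using g(1) assms(1) by auto
  ultimately show False using zdvd_imp_le by fastforce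
qed

lemma combine:
  fixes T C :: "int set" and N :: int
  assumes "finite T" "\<forall>j\<in>T. 0 < j \<and> 2*j < N" "finite C" "C \<subseteq> {1..<N}"
    "\<forall>x\<in>C. x \<notin> T \<and> (\<forall>j\<in>T. x \<noteq> N - j)"
  shows "card (C \<union> (T \<union> (\<lambda>j. N - j) ` T)) = card C + 2 * card T"
    and "\<Sum>(C \<union> (T \<union> (\<lambda>j. N - j) ` T)) = \<Sum>C + int (card T) * N"
    and "C \<union> (T \<union> (\<lambda>j. N - j) ` T) \<subseteq> {1..<N}"
proof -
  have d: "C \<inter> (T \<union> (\<lambda>j. N - j) ` T) = {}" using assms(5) by blast
  have f: "finite (T \<union> (\<lambda>j. N - j) ` T)" using assms(1) by simp
  show "card (C \<union> (T \<union> (\<lambda>j. N - j) ` T)) = card C + 2 * card T"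
    using card_Un_disjoint[OF assms(3) f d] pairs_facts(1)[OF assms(1,2)] by simp
  show "\<Sum>(C \<union> (T \<union> (\<lambda>j. N - j) ` T)) = \<Sum>C + int (card T) * N"
    using sum.union_disjoint[OF assms(3) f d, of "\<lambda>x. x"] pairs_facts(2)[OF assms(1,2)] by simp
  show "C \<union> (T \<union> (\<lambda>j. N - j) ` T) \<subseteq> {1..<N}"
    using assms(4) pairs_facts(3)[OF assms(1,2)] by blast
qed

lemma exists_set:
  fixes n k :: nat
  assumes "n \<ge> 6" "3 \<le> k" "k \<le> n - 3"
  shows "\<exists>A. A \<subseteq> {1..<int n} \<and> card A = k \<and> int n dvd \<Sum>A"
proof -
  define N where "N = int n"
  consider (ev) "even k" | (od1) "odd k" "k + 3 < n" | (od2) "odd k" "k + 3 = n"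
    using assms by linarith
  then show ?thesis
  proof cases
    case ev
    define T where "T = {1..int k div 2}"
    have T: "finite T" "\<forall>j\<in>T. 0 < j \<and> 2*j < N" using assms unfolding T_def N_def by auto
    have cT: "2 * card T = k" using ev unfolding T_def by auto
    have "({}::int set) \<union> (T \<union> (\<lambda>j. N - j) ` T) \<subseteq> {1..<N}
       \<and> card ({} \<union> (T \<union> (\<lambda>j. N - j) ` T)) = k
       \<and> N dvd \<Sum>({} \<union> (T \<union> (\<lambda>j. N - j) ` T))"
      using combine[OF T, of "{}"] cT by simp
    then show ?thesis unfolding N_def by blast
  next
    case od1
    define m where "m = (int k - 3) div 2"
    define T where "T = {4..3+m}"
    define C where "C = {1,2,N-3}"
    have T: "finite T" "\<forall>j\<in>T. 0 < j \<and> 2*j < N" using assms od1 unfolding T_def N_def m_def by auto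
    have cT: "3 + 2 * card T = k" using od1 assms unfolding T_def m_def by (auto elim!: oddE)
    have C: "finite C" "C \<subseteq> {1..<N}" "\<forall>x\<in>C. x \<notin> T \<and> (\<forall>j\<in>T. x \<noteq> N - j)"
      using assms od1 unfolding C_def T_def N_def m_def by auto
    have cC: "card C = 3" "\<Sum>C = N" using assms unfolding C_def N_def by auto
    have "C \<union> (T \<union> (\<lambda>j. N - j) ` T) \<subseteq> {1..<N}
       \<and> card (C \<union> (T \<union> (\<lambda>j. N - j) ` T)) = k
       \<and> N dvd \<Sum>(C \<union> (T \<union> (\<lambda>j. N - j) ` T))"
      using combine[OF T C] cT cC by simp
    then show ?thesis unfolding N_def by blast
  next
    case od2
    define h where "h = N div 2"
    have hN: "N = 2 * h" "h \<ge> 3" using od2 assms unfolding h_def N_def by (auto elim!: oddE)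
    define T where "T = {2..h-2}"
    define C where "C = {h, N-1, h+1}"
    have T: "finite T" "\<forall>j\<in>T. 0 < j \<and> 2*j < N" using hN unfolding T_def by auto
    have cT: "card T = nat (h - 3)" unfolding T_def by auto
    have C: "finite C" "C \<subseteq> {1..<N}" "\<forall>x\<in>C. x \<notin> T \<and> (\<forall>j\<in>T. x \<noteq> N - j)"
      using hN unfolding C_def T_def by auto
    have cC: "card C = 3" "\<Sum>C = 2 * N" using hN unfolding C_def by auto
    have e1: "card C + 2 * card T = k" using cC cT hN od2 unfolding N_def by linarith
    have e2: "\<Sum>C + int (card T) * N = (2 + int (card T)) * N" using cC by (simp add: algebra_simps)
    have "C \<union> (T \<union> (\<lambda>j. N - j) ` T) \<subseteq> {1..<N}
       \<and> card (C \<union> (T \<union> (\<lambda>j. N - j) ` T)) = k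
       \<and> N dvd \<Sum>(C \<union> (T \<union> (\<lambda>j. N - j) ` T))"
      using combine[OF T C] e1 e2 by simp
    then show ?thesis unfolding N_def by blast
  qed
qed

theorem mainTheorem4:
  fixes n k :: nat
  assumes "n \<ge> 6" and "coprime k n" and "3 \<le> k" and "k \<le> n - 3"
  shows "BO_Zn k n \<ge> k + 1"
proof -
  define P where "P = (\<lambda>l. \<forall>A. A \<subseteq> {0..<int n} \<and> card A \<ge> l \<longrightarrow>
                            (\<exists>S\<subseteq>A. zn_barycentric n k S))"
  have Pn: "P (n + 1)"
    unfolding P_def
  proof (intro allI impI)
    fix A :: "int set" assume a: "A \<subseteq> {0..<int n} \<and> n + 1 \<le> card A"
    have "card A \<le> card {0..<int n}" using a card_mono by blast
    then show "\<exists>S\<subseteq>A. zn_barycentric n k S" using a by simp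
  qed
  obtain A where A: "A \<subseteq> {1..<int n}" "card A = k" "int n dvd \<Sum>A"
    using exists_set[OF assms(1,3,4)] by blast
  have nb: "\<not> (\<exists>S\<subseteq>A. zn_barycentric n k S)" using key[OF A assms(2)] .
  have notP: "\<not> P l" if "l \<le> k" for l
    unfolding P_def using A nb that by (metis atLeastLessThan_iff order.trans subsetI subsetD zero_le_one order_trans)
  have "P (Least P)" using LeastI[of P, OF Pn] .
  then have "\<not> Least P \<le> k" using notP by blast
  then show ?thesis unfolding BO_Zn_def P_def[symmetric] by simp
qed

end
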